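(* Let $\langle X,d\rangle$ be a metric space with completion $\langle\widehat{X},\widehat{d}\rangle$. The following are equivalent: (1) $\widehat{X}$ is cofinally Bourbaki quasi-complete; (2) every Cauchy-continuous function $f$ from $X$ to any metric space $\langle Y,\rho\rangle$ maps every cofinally Bourbaki quasi-Cauchy sequence in $X$ to a sequence in $Y$ that has a Cauchy subsequence; (3) every Cauchy-continuous function from $X$ to any metric space $\langle Y,\rho\rangle$ maps every cofinally Bourbaki quasi-Cauchy sequence in $X$ to a cofinally Cauchy sequence in $Y$; (4) every Cauchy-continuous function from $X$ to any metric space $\langle Y,\rho\rangle$ maps every cofinally Bourbaki quasi-Cauchy sequence in $X$ to a cofinally Bourbaki-Cauchy sequence in $Y$; (5) every real-valued Cauchy-continuous function on $X$ maps every cofinally Bourbaki quasi-Cauchy sequence in $X$ to a cofinally Bourbaki-Cauchy sequence in $\mathbb{R}$; (6) every cofinally Bourbaki quasi-Cauchy sequence in $X$ has a Cauchy subsequence.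
   Context: A function is Cauchy-continuous if it maps Cauchy sequences to Cauchy sequences. For $\varepsilon>0$, an $\varepsilon$-chain joining $x,y$ is a finite sequence $x=x_0,\dots,x_n=y$ with consecutive distances $<\varepsilon$. A sequence $\langle x_n\rangle$ in a metric space is cofinally Bourbaki quasi-Cauchy if for every $\varepsilon>0$ there is an infinite $N_\varepsilon\subseteq\mathbb{N}$ such that any $x_j,x_k$ with $j,k\in N_\varepsilon$ can be joined by an $\varepsilon$-chain (in that space); a metric space is cofinally Bourbaki quasi-complete if every such sequence has a cluster point. A sequence $\langle y_n\rangle$ in $\langle Y,\rho\rangle$ is cofinally Cauchy if for every $\varepsilon>0$ there is an infinite $N_\varepsilon\subseteq\mathbb{N}$ with $\rho(y_n,y_m)<\varepsilon$ for $n,m\in N_\varepsilon$. With $S^1_\rho(p,\varepsilon)$ the open $\varepsilon$-ball about $p$ and $S^{m}_\rho(p,\varepsilon)=\{y:\rho(y,S^{m-1}_\rho(p,\varepsilon))<\varepsilon\}$, $\langle y_n\rangle$ is cofinally Bourbaki-Cauchy if for every $\varepsilon>0$ there exist an infinite $N_\varepsilon\subseteq\mathbb{N}$, $m\in\mathbb{N}$, $p\in Y$ with $y_n\in S^m_\rho(p,\varepsilon)$ for all $n\in N_\varepsilon$. *)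

theory Defs
  imports "HOL-Analysis.Analysis"
begin

definition eps_chain :: "'a metric \<Rightarrow> real \<Rightarrow> 'a \<Rightarrow> 'a \<Rightarrow> bool" where
  "eps_chain m e x y \<longleftrightarrow>
     (\<exists>(n::nat) (p::nat \<Rightarrow> 'a). p 0 = x \<and> p n = y \<and> (\<forall>i\<le>n. p i \<in> mspace m) \<and>
        (\<forall>i<n. mdist m (p i) (p (Suc i)) < e))"

definition cofinally_Bourbaki_quasi_Cauchy :: "'a metric \<Rightarrow> (nat \<Rightarrow> 'a) \<Rightarrow> bool" where
  "cofinally_Bourbaki_quasi_Cauchy m x \<longleftrightarrow> range x \<subseteq> mspace m \<and>
     (\<forall>e>0. \<exists>N::nat set. infinite N \<and> (\<forall>j\<in>N. \<forall>k\<in>N. eps_chain m e (x j) (x k)))"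

definition cluster_point :: "'a metric \<Rightarrow> (nat \<Rightarrow> 'a) \<Rightarrow> 'a \<Rightarrow> bool" where
  "cluster_point m x p \<longleftrightarrow> p \<in> mspace m \<and>
     (\<forall>e>0. \<forall>n. \<exists>k\<ge>n. mdist m (x k) p < e)"

definition cofinally_Bourbaki_quasi_complete :: "'a metric \<Rightarrow> bool" where
  "cofinally_Bourbaki_quasi_complete m \<longleftrightarrow>
     (\<forall>x. cofinally_Bourbaki_quasi_Cauchy m x \<longrightarrow> (\<exists>p. cluster_point m x p))"

definition cofinally_Cauchy :: "'a metric \<Rightarrow> (nat \<Rightarrow> 'a) \<Rightarrow> bool" where
  "cofinally_Cauchy m y \<longleftrightarrow> range y \<subseteq> mspace m \<and>
     (\<forall>e>0. \<exists>N::nat set. infinite N \<and> (\<forall>n\<in>N. \<forall>k\<in>N. mdist m (y n) (y k) < e))"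

text \<open>Iterated balls: S 0 = {p}, S 1 = open e-ball about p,
  S (m+1) = points at distance < e from S m (distance to a set is < e iff
  some point of the set is at distance < e).\<close>
primrec iter_ball :: "'a metric \<Rightarrow> 'a \<Rightarrow> real \<Rightarrow> nat \<Rightarrow> 'a set" where
  "iter_ball m p e 0 = {p} \<inter> mspace m"
| "iter_ball m p e (Suc k) = {y \<in> mspace m. \<exists>z \<in> iter_ball m p e k. mdist m y z < e}"

definition cofinally_Bourbaki_Cauchy :: "'a metric \<Rightarrow> (nat \<Rightarrow> 'a) \<Rightarrow> bool" where
  "cofinally_Bourbaki_Cauchy m y \<longleftrightarrow> range y \<subseteq> mspace m \<and>
     (\<forall>e>0. \<exists>(N::nat set) (k::nat) p. infinite N \<and> k \<ge> 1 \<and> p \<in> mspace m \<and>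
        (\<forall>n\<in>N. y n \<in> iter_ball m p e k))"

definition has_Cauchy_subsequence :: "'a metric \<Rightarrow> (nat \<Rightarrow> 'a) \<Rightarrow> bool" where
  "has_Cauchy_subsequence m y \<longleftrightarrow>
     (\<exists>r. strict_mono r \<and> Metric_space.MCauchy (mspace m) (mdist m) (y \<circ> r))"

definition is_completion :: "'a metric \<Rightarrow> 'c metric \<Rightarrow> ('a \<Rightarrow> 'c) \<Rightarrow> bool" where
  "is_completion X Xh emb \<longleftrightarrow> mcomplete_of Xh \<and> emb ` mspace X \<subseteq> mspace Xh \<and>
     (\<forall>x\<in>mspace X. \<forall>y\<in>mspace X. mdist Xh (emb x) (emb y) = mdist X x y) \<and>
     mtopology_of Xh closure_of (emb ` mspace X) = mspace Xh"

text \<open>Conditions (2)-(4) for target spaces whose points have type 'b.\<close>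
definition cond2 :: "'a metric \<Rightarrow> 'b itself \<Rightarrow> bool" where
  "cond2 X (_::'b itself) \<longleftrightarrow> (\<forall>(Y::'b metric) f x. Cauchy_continuous_map X Y f \<longrightarrow>
     cofinally_Bourbaki_quasi_Cauchy X x \<longrightarrow> has_Cauchy_subsequence Y (f \<circ> x))"

definition cond3 :: "'a metric \<Rightarrow> 'b itself \<Rightarrow> bool" where
  "cond3 X (_::'b itself) \<longleftrightarrow> (\<forall>(Y::'b metric) f x. Cauchy_continuous_map X Y f \<longrightarrow>
     cofinally_Bourbaki_quasi_Cauchy X x \<longrightarrow> cofinally_Cauchy Y (f \<circ> x))"

definition cond4 :: "'a metric \<Rightarrow> 'b itself \<Rightarrow> bool" where
  "cond4 X (_::'b itself) \<longleftrightarrow> (\<forall>(Y::'b metric) f x. Cauchy_continuous_map X Y f \<longrightarrow>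
     cofinally_Bourbaki_quasi_Cauchy X x \<longrightarrow> cofinally_Bourbaki_Cauchy Y (f \<circ> x))"

definition cond5 :: "'a metric \<Rightarrow> bool" where
  "cond5 X \<longleftrightarrow> (\<forall>(f::'a \<Rightarrow> real) x. Cauchy_continuous_map X euclidean_metric f \<longrightarrow>
     cofinally_Bourbaki_quasi_Cauchy X x \<longrightarrow> cofinally_Bourbaki_Cauchy euclidean_metric (f \<circ> x))"

definition cond6 :: "'a metric \<Rightarrow> bool" where
  "cond6 X \<longleftrightarrow> (\<forall>x. cofinally_Bourbaki_quasi_Cauchy X x \<longrightarrow> has_Cauchy_subsequence X x)"

end

theory Submission
  imports Defs
begin

lemma completionD:
  assumes "is_completion X Xh emb"
  shows "Metric_space.mcomplete (mspace Xh) (mdist Xh)"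
    and "\<And>x. x \<in> mspace X \<Longrightarrow> emb x \<in> mspace Xh"
    and "\<And>x y. x \<in> mspace X \<Longrightarrow> y \<in> mspace X \<Longrightarrow> mdist Xh (emb x) (emb y) = mdist X x y"
    and "mtopology_of Xh closure_of (emb ` mspace X) = mspace Xh"
proof -
  have h: "mcomplete_of Xh \<and> emb ` mspace X \<subseteq> mspace Xh \<and>
     (\<forall>x\<in>mspace X. \<forall>y\<in>mspace X. mdist Xh (emb x) (emb y) = mdist X x y) \<and>
     mtopology_of Xh closure_of (emb ` mspace X) = mspace Xh"
    using assms unfolding is_completion_def by assumption
  have h1: "mcomplete_of Xh" using h by (rule conjunct1)
  have h2: "emb ` mspace X \<subseteq> mspace Xh" using h by (rule conjunct1[OF conjunct2])
  have h3: "\<forall>x\<in>mspace X. \<forall>y\<in>mspace X. mdist Xh (emb x) (emb y) = mdist X x y"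
    using h by (rule conjunct1[OF conjunct2[OF conjunct2]])
  show "mtopology_of Xh closure_of (emb ` mspace X) = mspace Xh"
    using h by (rule conjunct2[OF conjunct2[OF conjunct2]])
  show "Metric_space.mcomplete (mspace Xh) (mdist Xh)" using h1 unfolding mcomplete_of_def by simp
  show "\<And>x. x \<in> mspace X \<Longrightarrow> emb x \<in> mspace Xh" using h2 by (simp add: image_subset_iff)
  show "\<And>x y. x \<in> mspace X \<Longrightarrow> y \<in> mspace X \<Longrightarrow> mdist Xh (emb x) (emb y) = mdist X x y"
    using h3 by simp
qed

lemma compl_dense:
  assumes "is_completion X Xh emb" "p \<in> mspace Xh" "e > 0"
  shows "\<exists>a\<in>mspace X. mdist Xh (emb a) p < e"
proof -
  have "p \<in> Metric_space.mtopology (mspace Xh) (mdist Xh) closure_of (emb ` mspace X)"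
    using completionD(4)[OF assms(1)] assms(2) unfolding mtopology_of_def by simp
  then have "\<forall>r>0. \<exists>y\<in>emb ` mspace X. y \<in> Metric_space.mball (mspace Xh) (mdist Xh) p r"
    unfolding Metric_space.metric_closure_of[OF Metric_space_mspace_mdist] by simp
  then obtain y where y: "y \<in> emb ` mspace X" "y \<in> Metric_space.mball (mspace Xh) (mdist Xh) p e"
    using assms(3) by blast
  from y(1) obtain a where a: "a \<in> mspace X" "y = emb a" by blast
  have "mdist Xh p y < e" using y(2) by (simp add: Metric_space.in_mball[OF Metric_space_mspace_mdist])
  then have "mdist Xh (emb a) p < e" using a(2) mdist_commute[where m=Xh and x=p and y=y] by simp
  then show ?thesis using a(1) by blast
qed

lemma compl_lim:
  assumes "is_completion X Xh emb" "Metric_space.MCauchy (mspace X) (mdist X) a"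
  shows "\<exists>q\<in>mspace Xh. \<forall>e>0. \<exists>N. \<forall>n\<ge>N. mdist Xh (emb (a n)) q < e"
proof -
  note iso = completionD(3)[OF assms(1)] and sub = completionD(2)[OF assms(1)]
    and c = completionD(1)[OF assms(1)]
  have ra: "\<And>n. a n \<in> mspace X" using assms(2) unfolding Metric_space.MCauchy_def[OF Metric_space_mspace_mdist] by blast
  have ca: "\<forall>e>0. \<exists>N. \<forall>n n'. N \<le> n \<longrightarrow> N \<le> n' \<longrightarrow> mdist X (a n) (a n') < e"
    using assms(2) unfolding Metric_space.MCauchy_def[OF Metric_space_mspace_mdist] by blast
  have "Metric_space.MCauchy (mspace Xh) (mdist Xh) (emb \<circ> a)"
    unfolding Metric_space.MCauchy_def[OF Metric_space_mspace_mdist]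
  proof (intro conjI allI impI)
    show "range (emb \<circ> a) \<subseteq> mspace Xh" using sub ra by auto
    fix e :: real assume "e > 0"
    then obtain N where "\<forall>n n'. N \<le> n \<longrightarrow> N \<le> n' \<longrightarrow> mdist X (a n) (a n') < e" using ca by blast
    then show "\<exists>N. \<forall>n n'. N \<le> n \<longrightarrow> N \<le> n' \<longrightarrow> mdist Xh ((emb \<circ> a) n) ((emb \<circ> a) n') < e"
      using iso ra by (intro exI[of _ N]) simp
  qed
  then obtain q where "limitin (Metric_space.mtopology (mspace Xh) (mdist Xh)) (emb \<circ> a) q sequentially"
    using c unfolding Metric_space.mcomplete_def[OF Metric_space_mspace_mdist] by blast
  then have "q \<in> mspace Xh \<and> (\<forall>e>0. \<exists>N. \<forall>n\<ge>N. (emb \<circ> a) n \<in> mspace Xh \<and> mdist Xh ((emb \<circ> a) n) q < e)"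
    by (simp add: Metric_space.limit_metric_sequentially[OF Metric_space_mspace_mdist])
  then show ?thesis unfolding comp_apply by blast
qed

lemma eps_chain_emb:
  assumes "is_completion X Xh emb" "eps_chain X e a b"
  shows "eps_chain Xh e (emb a) (emb b)"
proof -
  obtain n p where p: "p 0 = a" "p n = b" "\<forall>i\<le>n. p i \<in> mspace X"
      "\<forall>i<n. mdist X (p i) (p (Suc i)) < e"
    using assms(2) unfolding eps_chain_def by (elim exE conjE) blast
  have "(emb \<circ> p) 0 = emb a" using p(1) by simp
  moreover have "(emb \<circ> p) n = emb b" using p(2) by simp
  moreover have "\<forall>i\<le>n. (emb \<circ> p) i \<in> mspace Xh"
  proof (intro allI impI)
    fix i assume "i \<le> n"
    then have "p i \<in> mspace X" using p(3) by blast
    then show "(emb \<circ> p) i \<in> mspace Xh" unfolding comp_apply by (rule completionD(2)[OF assms(1)])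
  qed
  moreover have "\<forall>i<n. mdist Xh ((emb \<circ> p) i) ((emb \<circ> p) (Suc i)) < e"
  proof (intro allI impI)
    fix i assume i: "i < n"
    have m: "p i \<in> mspace X" "p (Suc i) \<in> mspace X" using p(3) i by auto
    have "mdist Xh ((emb \<circ> p) i) ((emb \<circ> p) (Suc i)) = mdist X (p i) (p (Suc i))"
      unfolding comp_apply by (rule completionD(3)[OF assms(1) m])
    then show "mdist Xh ((emb \<circ> p) i) ((emb \<circ> p) (Suc i)) < e" using p(4) i by simp
  qed
  ultimately show ?thesis unfolding eps_chain_def by blast
qed

lemma one_six:
  assumes "is_completion X Xh emb" "cofinally_Bourbaki_quasi_complete Xh"
  shows "cond6 X"
  unfolding cond6_def
proof (intro allI impI)
  fix x assume xq: "cofinally_Bourbaki_quasi_Cauchy X x"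
  note iso = completionD(3)[OF assms(1)] and sub = completionD(2)[OF assms(1)]
  have rx: "range x \<subseteq> mspace X" using xq unfolding cofinally_Bourbaki_quasi_Cauchy_def by blast
  have "cofinally_Bourbaki_quasi_Cauchy Xh (emb \<circ> x)"
    unfolding cofinally_Bourbaki_quasi_Cauchy_def
  proof (intro conjI allI impI)
    show "range (emb \<circ> x) \<subseteq> mspace Xh" using rx sub by auto
    fix e :: real assume "e > 0"
    then obtain N where N: "infinite N" "\<forall>j\<in>N. \<forall>k\<in>N. eps_chain X e (x j) (x k)"
      using xq unfolding cofinally_Bourbaki_quasi_Cauchy_def by blast
    have "eps_chain Xh e ((emb \<circ> x) j) ((emb \<circ> x) k)" if "j \<in> N" "k \<in> N" for j k
    proof -
      have "eps_chain X e (x j) (x k)" using N(2) that by blast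
      then show ?thesis unfolding comp_apply by (rule eps_chain_emb[OF assms(1)])
    qed
    then show "\<exists>N. infinite N \<and> (\<forall>j\<in>N. \<forall>k\<in>N. eps_chain Xh e ((emb \<circ> x) j) ((emb \<circ> x) k))"
      using N(1) by blast
  qed
  then obtain q where q: "cluster_point Xh (emb \<circ> x) q"
    using assms(2) unfolding cofinally_Bourbaki_quasi_complete_def by blast
  have qm: "q \<in> mspace Xh" and cq: "\<And>e n. e > 0 \<Longrightarrow> \<exists>k\<ge>n. mdist Xh (emb (x k)) q < e"
    using q unfolding cluster_point_def by auto
  obtain r where r: "\<forall>n. mdist Xh (emb (x (r n))) q < 1 / (real n + 1) \<and> r n < r (Suc n)"
  proof -
    have "\<exists>r. \<forall>n. mdist Xh (emb (x (r n))) q < 1 / (real n + 1) \<and> r n < r (Suc n)"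
    proof (rule dependent_nat_choice)
      show "\<exists>k. mdist Xh (emb (x k)) q < 1 / (real 0 + 1)" using cq[of 1 0] by simp
      fix k n assume "mdist Xh (emb (x k)) q < 1 / (real n + 1)"
      have pos: "0 < 1 / (real (Suc n) + 1)" by simp
      obtain k' where "k' \<ge> Suc k" "mdist Xh (emb (x k')) q < 1 / (real (Suc n) + 1)"
        using cq[OF pos, of "Suc k"] by blast
      then show "\<exists>k'. mdist Xh (emb (x k')) q < 1 / (real (Suc n) + 1) \<and> k < k'"
        by (blast dest: Suc_le_lessD)
    qed
    then show ?thesis using that by blast
  qed
  have sm: "strict_mono r" using r by (simp add: strict_mono_Suc_iff)
  have "Metric_space.MCauchy (mspace X) (mdist X) (x \<circ> r)"
    unfolding Metric_space.MCauchy_def[OF Metric_space_mspace_mdist]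
  proof (intro conjI allI impI)
    show "range (x \<circ> r) \<subseteq> mspace X" using rx by auto
    fix e :: real assume e: "e > 0"
    obtain N :: nat where N: "2 / e < real N" using reals_Archimedean2 by blast
    have small: "1 / (real n + 1) < e / 2" if "n \<ge> N" for n
    proof -
      have "2 / e < real n + 1" using N that by linarith
      then have "2 < e * (real n + 1)" using e by (simp add: field_simps)
      then show ?thesis using e by (simp add: field_simps)
    qed
    have "mdist X (x (r n)) (x (r n')) < e" if "n \<ge> N" "n' \<ge> N" for n n'
    proof -
      have m0: "x (r n) \<in> mspace X" "x (r n') \<in> mspace X" using rx by auto
      have m: "emb (x (r n)) \<in> mspace Xh" "emb (x (r n')) \<in> mspace Xh" using sub[OF m0(1)] sub[OF m0(2)] by auto
      have "mdist X (x (r n)) (x (r n')) = mdist Xh (emb (x (r n))) (emb (x (r n')))"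
        using iso[OF m0] by simp
      also have "\<dots> \<le> mdist Xh (emb (x (r n))) q + mdist Xh q (emb (x (r n')))"
        by (rule mdist_triangle[OF m(1) qm m(2)])
      also have "\<dots> < e" using r small[OF that(1)] small[OF that(2)]
        mdist_commute[where m=Xh and x=q and y="emb (x (r n'))"] by (smt (verit) field_sum_of_halves)
      finally show ?thesis .
    qed
    then show "\<exists>N. \<forall>n n'. N \<le> n \<longrightarrow> N \<le> n' \<longrightarrow> mdist X ((x \<circ> r) n) ((x \<circ> r) n') < e"
      by auto
  qed
  then show "has_Cauchy_subsequence X x" unfolding has_Cauchy_subsequence_def using sm by blast
qed

lemma six_two:
  assumes "cond6 X" shows "cond2 X TYPE('b)"
  unfolding cond2_def
proof (intro allI impI)
  fix Y :: "'b metric" and f x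
  assume cc: "Cauchy_continuous_map X Y f" and xq: "cofinally_Bourbaki_quasi_Cauchy X x"
  obtain r where r: "strict_mono r" "Metric_space.MCauchy (mspace X) (mdist X) (x \<circ> r)"
    using assms xq unfolding cond6_def has_Cauchy_subsequence_def by blast
  then have "Metric_space.MCauchy (mspace Y) (mdist Y) (f \<circ> (x \<circ> r))"
    using cc unfolding Cauchy_continuous_map_def by blast
  moreover have "f \<circ> (x \<circ> r) = (f \<circ> x) \<circ> r" by (simp add: comp_assoc)
  ultimately show "has_Cauchy_subsequence Y (f \<circ> x)"
    unfolding has_Cauchy_subsequence_def using r(1) by auto
qed

lemma ccm_range:
  assumes "Cauchy_continuous_map X Y f" "range x \<subseteq> mspace X"
  shows "range (f \<circ> x) \<subseteq> mspace Y"
proof -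
  have "f \<in> mspace X \<rightarrow> mspace Y" by (rule Cauchy_continuous_map_funspace[OF assms(1)])
  then show ?thesis using assms(2) by (auto simp: Pi_def)
qed

lemma two_three: "cond2 X TYPE('b) \<Longrightarrow> cond3 X TYPE('b)"
  unfolding cond3_def
proof (intro allI impI)
  fix Y :: "'b metric" and f x
  assume c2: "cond2 X TYPE('b)" and cc: "Cauchy_continuous_map X Y f"
    and xq: "cofinally_Bourbaki_quasi_Cauchy X x"
  obtain r where r: "strict_mono r" "Metric_space.MCauchy (mspace Y) (mdist Y) ((f \<circ> x) \<circ> r)"
    using c2 cc xq unfolding cond2_def has_Cauchy_subsequence_def by blast
  show "cofinally_Cauchy Y (f \<circ> x)" unfolding cofinally_Cauchy_def
  proof (intro conjI allI impI)
    show "range (f \<circ> x) \<subseteq> mspace Y"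
      using ccm_range[OF cc] xq unfolding cofinally_Bourbaki_quasi_Cauchy_def by blast
    fix e :: real assume "e > 0"
    then obtain N0 where N0: "\<forall>n n'. N0 \<le> n \<longrightarrow> N0 \<le> n' \<longrightarrow> mdist Y (((f \<circ> x) \<circ> r) n) (((f \<circ> x) \<circ> r) n') < e"
      using r(2) unfolding Metric_space.MCauchy_def[OF Metric_space_mspace_mdist] by blast
    have "infinite (r ` {N0..})"
    proof -
      have inj: "inj_on r {N0..}" by (rule inj_on_subset[OF strict_mono_imp_inj_on[OF r(1)] subset_UNIV])
      show ?thesis using finite_imageD[OF _ inj] infinite_Ici[of N0] by blast
    qed
    moreover have "\<forall>n\<in>r ` {N0..}. \<forall>k\<in>r ` {N0..}. mdist Y ((f \<circ> x) n) ((f \<circ> x) k) < e"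
    proof (intro ballI)
      fix n k assume "n \<in> r ` {N0..}" "k \<in> r ` {N0..}"
      then obtain i i' where "n = r i" "k = r i'" "N0 \<le> i" "N0 \<le> i'" by auto
      then show "mdist Y ((f \<circ> x) n) ((f \<circ> x) k) < e" using N0 by simp
    qed
    ultimately show "\<exists>N. infinite N \<and> (\<forall>n\<in>N. \<forall>k\<in>N. mdist Y ((f \<circ> x) n) ((f \<circ> x) k) < e)"
      by blast
  qed
qed

lemma three_four: "cond3 X TYPE('b) \<Longrightarrow> cond4 X TYPE('b)"
  unfolding cond4_def
proof (intro allI impI)
  fix Y :: "'b metric" and f x
  assume c3: "cond3 X TYPE('b)" and cc: "Cauchy_continuous_map X Y f"
    and xq: "cofinally_Bourbaki_quasi_Cauchy X x"
  have cy: "cofinally_Cauchy Y (f \<circ> x)" using c3 cc xq unfolding cond3_def by blast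
  show "cofinally_Bourbaki_Cauchy Y (f \<circ> x)" unfolding cofinally_Bourbaki_Cauchy_def
  proof (intro conjI allI impI)
    show "range (f \<circ> x) \<subseteq> mspace Y" using cy unfolding cofinally_Cauchy_def by blast
    fix e :: real assume "e > 0"
    then obtain N where N: "infinite N" "\<forall>n\<in>N. \<forall>k\<in>N. mdist Y ((f \<circ> x) n) ((f \<circ> x) k) < e"
      using cy unfolding cofinally_Cauchy_def by blast
    obtain n0 where n0: "n0 \<in> N" using N(1) by (metis finite.emptyI ex_in_conv)
    have ry: "range (f \<circ> x) \<subseteq> mspace Y" using cy unfolding cofinally_Cauchy_def by blast
    have "\<forall>n\<in>N. (f \<circ> x) n \<in> iter_ball Y ((f \<circ> x) n0) e 1"
      using N(2) n0 ry by auto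
    then show "\<exists>N k p. infinite N \<and> 1 \<le> k \<and> p \<in> mspace Y \<and> (\<forall>n\<in>N. (f \<circ> x) n \<in> iter_ball Y p e k)"
      using N(1) ry by blast
  qed
qed

lemma four_five: "cond4 X TYPE(real) \<Longrightarrow> cond5 X"
  unfolding cond4_def cond5_def by blast


lemma iter_ball_real: "y \<in> iter_ball euclidean_metric p e k \<Longrightarrow> \<bar>y - p\<bar> \<le> real k * e"
proof (induction k arbitrary: y)
  case 0 then show ?case by simp
next
  case (Suc k)
  then obtain z where z: "z \<in> iter_ball euclidean_metric p e k" "dist y z < e" by auto
  have "\<bar>z - p\<bar> \<le> real k * e" using Suc.IH z(1) .
  then show ?case using z(2) by (simp add: dist_real_def algebra_simps)
qed


lemma five_one:
  assumes "is_completion X Xh emb" "cond5 X"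
  shows "cofinally_Bourbaki_quasi_complete Xh"
proof (rule ccontr)
  assume "\<not> cofinally_Bourbaki_quasi_complete Xh"
  then obtain w where wC: "cofinally_Bourbaki_quasi_Cauchy Xh w" and ncl: "\<And>p. \<not> cluster_point Xh w p"
    unfolding cofinally_Bourbaki_quasi_complete_def by blast
  note iso = completionD(3)[OF assms(1)] and sub = completionD(2)[OF assms(1)]
  have wm: "\<And>n. w n \<in> mspace Xh" using wC unfolding cofinally_Bourbaki_quasi_Cauchy_def by blast
  define t where "t n p = real n * max 0 (1 - real (Suc n) * mdist Xh p (w n))" for n p
  define g where "g p = suminf (\<lambda>n. t n p)" for p
  define f where "f a = g (emb a)" for a
  have tnn: "t n p \<ge> 0" for n p unfolding t_def by simp
  have loc: "\<exists>r>0. \<exists>M. \<forall>p\<in>mspace Xh. mdist Xh p q < r \<longrightarrow> (\<forall>n\<ge>M. t n p = 0)"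
    if q: "q \<in> mspace Xh" for q
  proof -
    obtain e n0 where e: "e > 0" and n0: "\<forall>k\<ge>n0. mdist Xh (w k) q \<ge> e"
      using ncl[of q] q unfolding cluster_point_def by (auto simp: not_less)
    obtain M0 :: nat where M0: "2 / e < real M0" using reals_Archimedean2 by blast
    have "\<forall>p\<in>mspace Xh. mdist Xh p q < e/2 \<longrightarrow> (\<forall>n\<ge>max n0 M0. t n p = 0)"
    proof (intro ballI impI allI)
      fix p n assume p: "p \<in> mspace Xh" "mdist Xh p q < e/2" and n: "max n0 M0 \<le> n"
      have "mdist Xh (w n) q \<le> mdist Xh (w n) p + mdist Xh p q"
        by (rule mdist_triangle[OF wm p(1) q])
      moreover have "e \<le> mdist Xh (w n) q" using n0 n by simp
      ultimately have d: "mdist Xh p (w n) > e/2" using p(2) mdist_commute[where m=Xh and x=p and y="w n"] by linarith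
      have "2 / e < real (Suc n)" using M0 n by simp
      then have "2 < e * real (Suc n)" using e by (simp add: field_simps)
      then have "1 < real (Suc n) * (e/2)" by (simp add: field_simps)
      moreover have "real (Suc n) * (e/2) < real (Suc n) * mdist Xh p (w n)"
        using d by (intro mult_strict_left_mono) auto
      ultimately have "1 < real (Suc n) * mdist Xh p (w n)" by linarith
      then show "t n p = 0" unfolding t_def by simp
    qed
    moreover have "e/2 > 0" using e by simp
    ultimately show ?thesis by blast
  qed
  have gsum: "g p = (\<Sum>n<M. t n p)" if "\<forall>n\<ge>M. t n p = 0" for p M
    unfolding g_def by (rule suminf_finite) (use that in auto)
  have tlip: "\<bar>t n p - t n p'\<bar> \<le> real n * real (Suc n) * mdist Xh p p'"
    if "p \<in> mspace Xh" "p' \<in> mspace Xh" for n p p'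
  proof -
    have r: "\<bar>mdist Xh p (w n) - mdist Xh p' (w n)\<bar> \<le> mdist Xh p p'"
      using mdist_triangle[OF that(1) that(2) wm[of n]] mdist_triangle[OF that(2) that(1) wm[of n]]
        mdist_commute[where m=Xh and x=p and y=p'] by linarith
    have "\<bar>max 0 (1 - real (Suc n) * mdist Xh p (w n)) - max 0 (1 - real (Suc n) * mdist Xh p' (w n))\<bar>
        \<le> \<bar>real (Suc n) * mdist Xh p (w n) - real (Suc n) * mdist Xh p' (w n)\<bar>" by linarith
    also have "\<dots> = real (Suc n) * \<bar>mdist Xh p (w n) - mdist Xh p' (w n)\<bar>"
      by (simp add: abs_mult flip: right_diff_distrib)
    also have "\<dots> \<le> real (Suc n) * mdist Xh p p'" using r by (simp add: mult_left_mono)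
    finally have "\<bar>max 0 (1 - real (Suc n) * mdist Xh p (w n)) - max 0 (1 - real (Suc n) * mdist Xh p' (w n))\<bar>
        \<le> real (Suc n) * mdist Xh p p'" .
    then have "real n * \<bar>max 0 (1 - real (Suc n) * mdist Xh p (w n)) - max 0 (1 - real (Suc n) * mdist Xh p' (w n))\<bar>
        \<le> real n * (real (Suc n) * mdist Xh p p')" by (simp add: mult_left_mono)
    then show ?thesis unfolding t_def by (simp add: abs_mult flip: right_diff_distrib)
  qed
  have cc: "Cauchy_continuous_map X euclidean_metric f"
    unfolding Cauchy_continuous_map_def
  proof (intro allI impI)
    fix a assume a: "Metric_space.MCauchy (mspace X) (mdist X) a"
    have ra: "\<And>n. a n \<in> mspace X" using a unfolding Metric_space.MCauchy_def[OF Metric_space_mspace_mdist] by blast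
    obtain q where q: "q \<in> mspace Xh" and ql: "\<And>e. e > 0 \<Longrightarrow> \<exists>N. \<forall>n\<ge>N. mdist Xh (emb (a n)) q < e"
      using compl_lim[OF assms(1) a] by blast
    obtain r M where r: "r > 0" and rM: "\<forall>p\<in>mspace Xh. mdist Xh p q < r \<longrightarrow> (\<forall>n\<ge>M. t n p = 0)"
      using loc[OF q] by blast
    obtain N1 where N1: "\<forall>n\<ge>N1. mdist Xh (emb (a n)) q < r" using ql[OF r] by blast
    define L where "L = (\<Sum>n<M. real n * real (Suc n))"
    have L0: "L \<ge> 0" unfolding L_def by (simp add: sum_nonneg)
    show "Metric_space.MCauchy (mspace euclidean_metric) (mdist euclidean_metric) (f \<circ> a)"
      unfolding Metric_space.MCauchy_def[OF Metric_space_mspace_mdist]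
    proof (intro conjI allI impI)
      show "range (f \<circ> a) \<subseteq> mspace euclidean_metric" by simp
      fix e :: real assume e: "e > 0"
      have epos: "e / (L + 1) > 0" using e L0 by simp
      obtain N2 where N2: "\<forall>n n'. N2 \<le> n \<longrightarrow> N2 \<le> n' \<longrightarrow> mdist X (a n) (a n') < e / (L + 1)"
        using a epos unfolding Metric_space.MCauchy_def[OF Metric_space_mspace_mdist] by blast
      have "dist (f (a n)) (f (a n')) < e" if "max N1 N2 \<le> n" "max N1 N2 \<le> n'" for n n'
      proof -
        let ?p = "emb (a n)" and ?p' = "emb (a n')"
        have pm: "?p \<in> mspace Xh" "?p' \<in> mspace Xh" using sub ra by auto
        have z: "\<forall>k\<ge>M. t k ?p = 0" "\<forall>k\<ge>M. t k ?p' = 0" using rM pm N1 that by auto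
        have "dist (f (a n)) (f (a n')) = \<bar>(\<Sum>k<M. t k ?p) - (\<Sum>k<M. t k ?p')\<bar>"
          unfolding f_def using gsum[OF z(1)] gsum[OF z(2)] by (simp add: dist_real_def)
        also have "\<dots> = \<bar>\<Sum>k<M. t k ?p - t k ?p'\<bar>" by (simp add: sum_subtractf)
        also have "\<dots> \<le> (\<Sum>k<M. \<bar>t k ?p - t k ?p'\<bar>)" by (rule sum_abs)
        also have "\<dots> \<le> (\<Sum>k<M. real k * real (Suc k) * mdist Xh ?p ?p')"
          by (rule sum_mono) (use tlip pm in blast)
        also have "\<dots> = L * mdist X (a n) (a n')" unfolding L_def
          by (simp add: sum_distrib_right iso ra)
        also have "\<dots> \<le> L * (e / (L + 1))"
          using N2 that L0 by (intro mult_left_mono) (auto simp: less_imp_le)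
        also have "\<dots> < e" using L0 e by (simp add: field_simps)
        finally show ?thesis .
      qed
      then show "\<exists>N. \<forall>n n'. N \<le> n \<longrightarrow> N \<le> n' \<longrightarrow> mdist euclidean_metric ((f \<circ> a) n) ((f \<circ> a) n') < e"
        by (intro exI[of _ "max N1 N2"] allI impI) simp
    qed
  qed
  have "\<forall>n. \<exists>a. a \<in> mspace X \<and> mdist Xh (emb a) (w n) < 1 / (2 * (real n + 1))"
  proof
    fix n
    have "1 / (2 * (real n + 1)) > 0" by simp
    then obtain a where "a \<in> mspace X" "mdist Xh (emb a) (w n) < 1 / (2 * (real n + 1))"
      using compl_dense[OF assms(1) wm] by blast
    then show "\<exists>a. a \<in> mspace X \<and> mdist Xh (emb a) (w n) < 1 / (2 * (real n + 1))" by blast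
  qed
  then obtain x where xm: "\<And>n. x n \<in> mspace X" and xd: "\<And>n. mdist Xh (emb (x n)) (w n) < 1 / (2 * (real n + 1))"
    by metis
  have fx: "f (x n) \<ge> real n / 2" for n
  proof -
    obtain r M where rM: "\<forall>p\<in>mspace Xh. mdist Xh p (emb (x n)) < r \<longrightarrow> (\<forall>k\<ge>M. t k p = 0)" and r: "r > 0"
      using loc[OF sub[OF xm]] by blast
    have d0: "mdist Xh (emb (x n)) (emb (x n)) = 0" using mdist_zero[OF sub[OF xm] sub[OF xm]] by simp
    have "mdist Xh (emb (x n)) (emb (x n)) < r" using d0 r by simp
    then have zM: "\<forall>k\<ge>M. t k (emb (x n)) = 0" using rM sub[OF xm] by blast
    have z: "\<forall>k\<ge>max M (Suc n). t k (emb (x n)) = 0" using zM by simp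
    have "t n (emb (x n)) \<le> (\<Sum>k<max M (Suc n). t k (emb (x n)))"
      by (rule member_le_sum) (auto simp: tnn)
    moreover have "t n (emb (x n)) \<ge> real n / 2"
    proof -
      have "real (Suc n) * mdist Xh (emb (x n)) (w n) \<le> 1/2"
        using xd[of n] by (simp add: field_simps)
      then have "1/2 \<le> max 0 (1 - real (Suc n) * mdist Xh (emb (x n)) (w n))" by linarith
      then have "real n * (1/2) \<le> real n * max 0 (1 - real (Suc n) * mdist Xh (emb (x n)) (w n))"
        by (rule mult_left_mono) simp
      then show ?thesis unfolding t_def by simp
    qed
    ultimately show ?thesis unfolding f_def using gsum[OF z] by simp
  qed
  have xq: "cofinally_Bourbaki_quasi_Cauchy X x"
    unfolding cofinally_Bourbaki_quasi_Cauchy_def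
  proof (intro conjI allI impI)
    show "range x \<subseteq> mspace X" using xm by auto
    fix e :: real assume e: "e > 0"
    then obtain N where N: "infinite N" "\<forall>j\<in>N. \<forall>k\<in>N. eps_chain Xh (e/3) (w j) (w k)"
      using wC unfolding cofinally_Bourbaki_quasi_Cauchy_def by (meson divide_pos_pos zero_less_numeral)
    obtain n1 :: nat where n1: "3 / e < real n1" using reals_Archimedean2 by blast
    have xc: "mdist Xh (emb (x n)) (w n) < e/3" if "n \<ge> n1" for n
    proof -
      have "3 / e < real n + 1" using n1 that by linarith
      then have "3 < e * (real n + 1)" using e by (simp add: field_simps)
      then have "1 / (2 * (real n + 1)) < e / 3" using e by (simp add: field_simps)
      then show ?thesis using xd[of n] by linarith
    qed
    have "\<forall>j\<in>N - {..<n1}. \<forall>k\<in>N - {..<n1}. eps_chain X e (x j) (x k)"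
    proof (intro ballI)
      fix j k assume jk: "j \<in> N - {..<n1}" "k \<in> N - {..<n1}"
      obtain m p where p: "p 0 = w j" "p m = w k" "\<forall>i\<le>m. p i \<in> mspace Xh"
          "\<forall>i<m. mdist Xh (p i) (p (Suc i)) < e/3"
        using N(2) jk unfolding eps_chain_def by blast
      have "\<forall>i. \<exists>a. a \<in> mspace X \<and> (i \<le> m \<longrightarrow> mdist Xh (emb a) (p i) < e/3) \<and> (i = 0 \<longrightarrow> a = x j)"
      proof
        fix i
        show "\<exists>a. a \<in> mspace X \<and> (i \<le> m \<longrightarrow> mdist Xh (emb a) (p i) < e/3) \<and> (i = 0 \<longrightarrow> a = x j)"
        proof (cases "i = 0")
          case True then show ?thesis using xm xc jk p(1) by auto
        next
          case False
          show ?thesis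
          proof (cases "i \<le> m")
            case True
            then obtain a where "a \<in> mspace X" "mdist Xh (emb a) (p i) < e/3"
              using compl_dense[OF assms(1), of "p i" "e/3"] p(3) e by auto
            then show ?thesis using False by auto
          qed (use False xm in auto)
        qed
      qed
      then obtain A where A: "\<And>i. A i \<in> mspace X" "\<And>i. i \<le> m \<Longrightarrow> mdist Xh (emb (A i)) (p i) < e/3"
          "A 0 = x j" by metis
      define q where "q i = (if i \<le> m then A i else x k)" for i
      show "eps_chain X e (x j) (x k)" unfolding eps_chain_def
      proof (intro exI[of _ "Suc m"] exI[of _ q] conjI allI impI)
        show "q 0 = x j" using A(3) by (simp add: q_def)
        show "q (Suc m) = x k" by (simp add: q_def)
        show "q i \<in> mspace X" for i using A(1) xm by (simp add: q_def)
        fix i assume i: "i < Suc m"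
        show "mdist X (q i) (q (Suc i)) < e"
        proof (cases "i < m")
          case True
          have "mdist X (q i) (q (Suc i)) = mdist Xh (emb (A i)) (emb (A (Suc i)))"
            using True by (simp add: q_def iso A(1))
          also have "\<dots> \<le> mdist Xh (emb (A i)) (p i) + mdist Xh (p i) (emb (A (Suc i)))"
            using mdist_triangle[OF sub[OF A(1)[of i]] _ sub[OF A(1)[of "Suc i"]], where y="p i"] p(3) True by simp
          also have "\<dots> \<le> mdist Xh (emb (A i)) (p i) + (mdist Xh (p i) (p (Suc i)) + mdist Xh (p (Suc i)) (emb (A (Suc i))))"
            using mdist_triangle[OF _ _ sub[OF A(1)[of "Suc i"]], where x="p i" and y="p (Suc i)"] p(3) True by simp
          also have "\<dots> < e" using A(2)[of i, OF less_imp_le[OF True]] A(2)[of "Suc i", OF Suc_leI[OF True]]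
            p(4)[rule_format, OF True]
            mdist_commute[where m=Xh and x="p (Suc i)" and y="emb (A (Suc i))"] by linarith
          finally show ?thesis .
        next
          case False
          then have im: "i = m" using i by simp
          have xk: "mdist Xh (emb (x k)) (w k) < e/3" using xc[of k] jk by simp
          have "mdist X (q i) (q (Suc i)) = mdist Xh (emb (A m)) (emb (x k))"
            using im by (simp add: q_def iso A(1) xm)
          also have "\<dots> \<le> mdist Xh (emb (A m)) (p m) + mdist Xh (p m) (emb (x k))"
            using mdist_triangle[OF sub[OF A(1)[of m]] _ sub[OF xm[of k]], where y="p m"] p(3) by simp
          also have "\<dots> < e" using A(2)[of m, OF order_refl] xk p(2) e
            mdist_commute[where m=Xh and x="w k" and y="emb (x k)"] by simp
          finally show ?thesis .
        qed
      qed
    qed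
    moreover have "infinite (N - {..<n1})" using N(1) by simp
    ultimately show "\<exists>N. infinite N \<and> (\<forall>j\<in>N. \<forall>k\<in>N. eps_chain X e (x j) (x k))" by blast
  qed
  have "cofinally_Bourbaki_Cauchy euclidean_metric (f \<circ> x)"
    using assms(2) cc xq unfolding cond5_def by blast
  then obtain N k p0 where N: "infinite N" and Nb: "\<forall>n\<in>N. f (x n) \<in> iter_ball euclidean_metric p0 1 k"
    unfolding cofinally_Bourbaki_Cauchy_def by (metis comp_apply zero_less_one)
  obtain n where n: "n \<in> N" "real n > 2 * (\<bar>p0\<bar> + real k)"
  proof -
    obtain m0 :: nat where m0: "2 * (\<bar>p0\<bar> + real k) < real m0" using reals_Archimedean2 by blast
    obtain n where "n > m0" "n \<in> N" using N unfolding infinite_nat_iff_unbounded by blast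
    moreover have "real m0 < real n" using \<open>n > m0\<close> by simp
    ultimately show ?thesis using that m0 by (meson less_trans)
  qed
  have "\<bar>f (x n) - p0\<bar> \<le> real k" using iter_ball_real[OF Nb[rule_format, OF n(1)]] by simp
  then have "f (x n) - p0 \<le> real k" by (simp add: abs_le_iff)
  moreover have "p0 \<le> \<bar>p0\<bar>" by (rule abs_ge_self)
  ultimately have s1: "f (x n) \<le> \<bar>p0\<bar> + real k" by linarith
  have s2: "\<bar>p0\<bar> + real k < real n / 2" using n(2) by (simp add: field_simps)
  have s3: "real n / 2 \<le> f (x n)" by (rule fx)
  show False using s1 s2 s3 by linarith
qed

theorem mainTheorem8:
  fixes X :: "'a metric" and Xh :: "'c metric" and emb :: "'a \<Rightarrow> 'c"
  assumes "is_completion X Xh emb"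
  shows "(cofinally_Bourbaki_quasi_complete Xh \<longrightarrow>
            cond2 X TYPE('b) \<and> cond3 X TYPE('b) \<and> cond4 X TYPE('b))
       \<and> (cond2 X TYPE(real) \<longrightarrow> cofinally_Bourbaki_quasi_complete Xh)
       \<and> (cond3 X TYPE(real) \<longrightarrow> cofinally_Bourbaki_quasi_complete Xh)
       \<and> (cond4 X TYPE(real) \<longrightarrow> cofinally_Bourbaki_quasi_complete Xh)
       \<and> (cofinally_Bourbaki_quasi_complete Xh \<longleftrightarrow> cond5 X)
       \<and> (cofinally_Bourbaki_quasi_complete Xh \<longleftrightarrow> cond6 X)"
proof -
  have c4: "cond4 X TYPE(real) \<Longrightarrow> cofinally_Bourbaki_quasi_complete Xh"
    using five_one[OF assms] four_five by blast
  have c3: "cond3 X TYPE(real) \<Longrightarrow> cofinally_Bourbaki_quasi_complete Xh"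
    using c4 three_four by blast
  have c2: "cond2 X TYPE(real) \<Longrightarrow> cofinally_Bourbaki_quasi_complete Xh"
    using c3 two_three by blast
  have c6: "cond6 X \<Longrightarrow> cofinally_Bourbaki_quasi_complete Xh"
    using c2 six_two by blast
  have d2: "cofinally_Bourbaki_quasi_complete Xh \<Longrightarrow> cond2 X TYPE('b)"
    using one_six[OF assms] six_two by blast
  have d3: "cofinally_Bourbaki_quasi_complete Xh \<Longrightarrow> cond3 X TYPE('b)"
    using d2 two_three by blast
  have d4: "cofinally_Bourbaki_quasi_complete Xh \<Longrightarrow> cond4 X TYPE('b)"
    using d3 three_four by blast
  have r2: "cofinally_Bourbaki_quasi_complete Xh \<Longrightarrow> cond2 X TYPE(real)"
    using one_six[OF assms] six_two by blast
  have d5: "cofinally_Bourbaki_quasi_complete Xh \<Longrightarrow> cond5 X"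
    using r2 two_three three_four four_five by blast
  have d6: "cofinally_Bourbaki_quasi_complete Xh \<Longrightarrow> cond6 X"
    using one_six[OF assms] by blast
  show ?thesis
    using c2 c3 c4 c6 d2 d3 d4 d5 d6 five_one[OF assms] by blast
qed

end
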